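(* Let $\sigma$ be the map $\sigma^a(R)=hR^aJ(g;R)$, $\sigma^N(R)=A(g;R)J(g;R)$, let $\sigma^q_p=\partial\sigma^q/\partial R^p$, and for $R$ with $q(R)>0$ put $t=\sigma(R)$, $S(t)=\sqrt{r_{rs}t^rt^s}$, $L^p=t^p/S(t)$, $L_p=r_{pq}L^q$. Then $$n^{rs}:=\sigma^r_p\,\sigma^s_q\,g^{pq}(g;R)=h^2r^{rs}+\tfrac14g^2L^rL^s,$$ its inverse is $$n_{rs}=\frac1{h^2}r_{rs}-\frac14G^2L_rL_s,$$ and $\det(n_{rs})=h^{2(1-N)}\det(r_{ab})$.
   Context: Let $N\ge2$, $V_N=\mathbb{R}^N$ with points $R=(R^1,\dots,R^N)$, $Z=R^N$; indices $a,b$ run over $1,\dots,N-1$, $p,q,r,s$ over $1,\dots,N$, repeated indices summed. Fix a symmetric positive-definite matrix $(r_{ab})$, $q(R)=\sqrt{r_{ab}R^aR^b}$, and let $r_{pq}$ be the $N\times N$ matrix with $r_{NN}=1$, $r_{Na}=0$ and entries $r_{ab}$, with inverse $r^{pq}$. Fix $g\in(-2,2)$, $h=\sqrt{1-g^2/4}$, $G=g/h$. Define $B(g;R)=Z^2+gqZ+q^2$, $A(g;R)=Z+\frac12gq$, $\Phi(g;R)=\arctan(A/(hq))$ for $q>0$ ($\Phi=\pm\pi/2$ if $q=0$, $Z\gtrless0$), $J(g;R)=e^{\frac12G\Phi}$, the Finsleroid metric function $K(g;R)=\sqrt{B}\,J$, the Finsler metric tensor $g_{pq}=\frac12\partial^2K^2/\partial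 R^p\partial R^q$ and its inverse $g^{pq}$. *)

theory Defs
  imports "HOL-Analysis.Analysis"
begin

text \<open>Points of V_N = R^N are vectors indexed by 'm option: the indices
  a = 1..N-1 are the elements Some a (a :: 'm), the index N is None.
  Hence N = CARD('m option) = CARD('m) + 1.  The matrix (r_ab) is a
  real^'m^'m.\<close>

definition Zc :: "real^('m::finite option) \<Rightarrow> real" where
  "Zc R = R $ None"

definition qf :: "real^'m^'m \<Rightarrow> real^('m::finite option) \<Rightarrow> real" where
  "qf r R = sqrt (\<Sum>a\<in>UNIV. \<Sum>b\<in>UNIV. r $ a $ b * R $ Some a * R $ Some b)"

definition rfull :: "real^'m^'m \<Rightarrow> real^('m::finite option)^('m option)" where
  "rfull r = (\<chi> p q. case (p, q) of
       (Some a, Some b) \<Rightarrow> r $ a $ b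
     | (None, None) \<Rightarrow> 1
     | _ \<Rightarrow> 0)"

definition hh :: "real \<Rightarrow> real" where
  "hh g = sqrt (1 - g^2 / 4)"

definition GG :: "real \<Rightarrow> real" where
  "GG g = g / hh g"

definition Bf :: "real \<Rightarrow> real^'m^'m \<Rightarrow> real^('m::finite option) \<Rightarrow> real" where
  "Bf g r R = (Zc R)^2 + g * qf r R * Zc R + (qf r R)^2"

definition Af :: "real \<Rightarrow> real^'m^'m \<Rightarrow> real^('m::finite option) \<Rightarrow> real" where
  "Af g r R = Zc R + g * qf r R / 2"

definition Phif :: "real \<Rightarrow> real^'m^'m \<Rightarrow> real^('m::finite option) \<Rightarrow> real" where
  "Phif g r R = (if qf r R > 0 then arctan (Af g r R / (hh g * qf r R))
                 else if Zc R > 0 then pi / 2 else - pi / 2)"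

definition Jf :: "real \<Rightarrow> real^'m^'m \<Rightarrow> real^('m::finite option) \<Rightarrow> real" where
  "Jf g r R = exp (GG g / 2 * Phif g r R)"

definition Kf :: "real \<Rightarrow> real^'m^'m \<Rightarrow> real^('m::finite option) \<Rightarrow> real" where
  "Kf g r R = sqrt (Bf g r R) * Jf g r R"

definition partial :: "'n::finite \<Rightarrow> (real^'n \<Rightarrow> real) \<Rightarrow> real^'n \<Rightarrow> real" where
  "partial p f R = deriv (\<lambda>s. f (R + s *\<^sub>R axis p 1)) 0"

definition gmet :: "real \<Rightarrow> real^'m^'m \<Rightarrow> real^('m::finite option)
                    \<Rightarrow> real^('m option)^('m option)" where
  "gmet g r R = (\<chi> p q. partial p (\<lambda>X. partial q (\<lambda>Y. (Kf g r Y)^2 / 2) X) R)"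

definition sigma :: "real \<Rightarrow> real^'m^'m \<Rightarrow> real^('m::finite option) \<Rightarrow> real^('m option)" where
  "sigma g r R = (\<chi> p. case p of Some a \<Rightarrow> hh g * R $ Some a * Jf g r R
                               | None \<Rightarrow> Af g r R * Jf g r R)"

definition sigjac :: "real \<Rightarrow> real^'m^'m \<Rightarrow> real^('m::finite option)
                      \<Rightarrow> 'm option \<Rightarrow> 'm option \<Rightarrow> real" where
  "sigjac g r R q p = partial p (\<lambda>X. sigma g r X $ q) R"

definition Sf :: "real^'m^'m \<Rightarrow> real^('m::finite option) \<Rightarrow> real" where
  "Sf r t = sqrt (\<Sum>p\<in>UNIV. \<Sum>q\<in>UNIV. rfull r $ p $ q * t $ p * t $ q)"

end

theory Submission
  imports Defs
begin


definition sB :: "real \<Rightarrow> real \<Rightarrow> real \<Rightarrow> real" where "sB g z w = z^2 + g*w*z + w^2"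
definition sA :: "real \<Rightarrow> real \<Rightarrow> real \<Rightarrow> real" where "sA g z w = z + g*w/2"
definition sJ :: "real \<Rightarrow> real \<Rightarrow> real \<Rightarrow> real" where
  "sJ g z w = exp (GG g / 2 * arctan (sA g z w / (hh g * w)))"

lemma g4: "-2 < g \<Longrightarrow> g < (2::real) \<Longrightarrow> g^2 < 4"
proof -
  assume "-2 < g" "g < 2"
  then have "(2 - g)*(2+g) > 0" by simp
  then show ?thesis by (simp add: algebra_simps power2_eq_square)
qed

lemma hh_pos: "-2 < g \<Longrightarrow> g < 2 \<Longrightarrow> hh g > 0"
  unfolding hh_def using g4[of g] by simp

lemma hh_sq: "-2 < g \<Longrightarrow> g < 2 \<Longrightarrow> (hh g)^2 = 1 - g^2/4"
  unfolding hh_def using g4[of g] by simp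

lemma GG_hh: "-2 < g \<Longrightarrow> g < 2 \<Longrightarrow> GG g * hh g = g"
  unfolding GG_def using hh_pos[of g] by simp

lemma sB_eq: "-2 < g \<Longrightarrow> g < 2 \<Longrightarrow> sB g z w = (sA g z w)^2 + (hh g)^2 * w^2"
  unfolding sB_def sA_def hh_sq by (simp add: power2_eq_square field_simps)

lemma sB_pos: "-2 < g \<Longrightarrow> g < 2 \<Longrightarrow> w > 0 \<Longrightarrow> sB g z w > 0"
  unfolding sB_eq using hh_pos[of g]
  by (metis add_nonneg_pos hh_pos mult_pos_pos zero_less_power zero_le_power2)

lemma sB_nonneg: "-2 < g \<Longrightarrow> g < 2 \<Longrightarrow> sB g z w \<ge> 0"
  unfolding sB_eq by simp

lemma DsJ:
  assumes zf: "(Zs has_real_derivative z') (at s)" and wf: "(Ws has_real_derivative w') (at s)"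
    and w: "Ws s > 0" and g: "-2 < g" "g < 2"
  shows "((\<lambda>s. sJ g (Zs s) (Ws s)) has_real_derivative
     sJ g (Zs s) (Ws s) * g / (2 * sB g (Zs s) (Ws s)) * (Ws s * z' - Zs s * w')) (at s)"
proof -
  have h: "hh g > 0" using hh_pos g by auto
  have B: "sB g (Zs s) (Ws s) > 0" using sB_pos g w by auto
  have key: "1 + (sA g (Zs s) (Ws s) / (hh g * Ws s))^2 = sB g (Zs s) (Ws s) / ((hh g)^2 * (Ws s)^2)"
    using h w by (simp add: sB_eq[OF g] field_simps power2_eq_square)
  let ?u = "\<lambda>s. sA g (Zs s) (Ws s) / (hh g * Ws s)"
  have d1: "(?u has_real_derivative ((z' + g*w'/2) * (hh g * Ws s) - sA g (Zs s) (Ws s) * (hh g * w')) / (hh g * Ws s)^2) (at s)"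
    unfolding sA_def using h w
    by (auto intro!: derivative_eq_intros zf wf simp: field_simps power2_eq_square)
  have d2: "((\<lambda>s. GG g / 2 * arctan (?u s)) has_real_derivative GG g / 2 * (inverse (1 + (?u s)^2) * (((z' + g*w'/2) * (hh g * Ws s) - sA g (Zs s) (Ws s) * (hh g * w')) / (hh g * Ws s)^2))) (at s)"
    by (rule DERIV_cmult, rule DERIV_chain2[OF DERIV_arctan d1])
  have d3: "((\<lambda>s. sJ g (Zs s) (Ws s)) has_real_derivative sJ g (Zs s) (Ws s) * (GG g / 2 * (inverse (1 + (?u s)^2) * (((z' + g*w'/2) * (hh g * Ws s) - sA g (Zs s) (Ws s) * (hh g * w')) / (hh g * Ws s)^2)))) (at s)"
    unfolding sJ_def by (rule DERIV_chain2[OF DERIV_exp d2])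
  have e: "GG g / 2 * (inverse (1 + (?u s)^2) * (((z' + g*w'/2) * (hh g * Ws s) - sA g (Zs s) (Ws s) * (hh g * w')) / (hh g * Ws s)^2))
     = g / (2 * sB g (Zs s) (Ws s)) * (Ws s * z' - Zs s * w')"
    unfolding key using h w B GG_hh[OF g] unfolding GG_def sA_def
    by (simp add: field_simps power2_eq_square)
  show ?thesis using d3 unfolding e by (simp add: mult.assoc)
qed

definition Q2 :: "real^'m^'m \<Rightarrow> real^('m::finite option) \<Rightarrow> real" where
  "Q2 r X = (\<Sum>a\<in>UNIV. \<Sum>b\<in>UNIV. r $ a $ b * X $ Some a * X $ Some b)"
definition yv :: "real^'m^'m \<Rightarrow> real^('m::finite option) \<Rightarrow> real^('m option)" where
  "yv r X = (\<chi> k. case k of Some a \<Rightarrow> (\<Sum>b\<in>UNIV. r $ a $ b * X $ Some b) | None \<Rightarrow> 0)"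
definition r0 :: "real^'m^'m \<Rightarrow> real^('m::finite option)^('m option)" where
  "r0 r = (\<chi> k l. case k of Some a \<Rightarrow> (case l of Some b \<Rightarrow> r $ a $ b | None \<Rightarrow> 0) | None \<Rightarrow> 0)"
definition xt :: "real^('m::finite option) \<Rightarrow> real^('m option)" where
  "xt X = (\<chi> k. case k of Some a \<Rightarrow> X $ Some a | None \<Rightarrow> 0)"
definition eN :: "'m option \<Rightarrow> real" where "eN k = (if k = None then 1 else 0)"
definition Ip :: "real^('m::finite option)^('m option)" where
  "Ip = (\<chi> k l. if k = l \<and> k \<noteq> None then 1 else 0)"

lemma qf_Q2: "qf r X = sqrt (Q2 r X)" unfolding qf_def Q2_def ..

lemma line_nth: "(X + s *\<^sub>R axis p 1) $ k = X $ k + s * (if k = p then 1 else 0)"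
  by (simp add: axis_def)

lemma Zc_line: "Zc (X + s *\<^sub>R axis p 1) = Zc X + s * eN p"
  unfolding Zc_def eN_def line_nth by auto

lemma xt_line: "xt (X + s *\<^sub>R axis p 1) $ k = xt X $ k + s * Ip $ k $ p"
  unfolding xt_def Ip_def line_nth by (cases k; cases p; auto)

lemma mult_delta1: "(x::real) * (if P then 1 else 0) = (if P then x else 0)" by simp
lemma mult_delta2: "(if P then 1 else 0) * (x::real) = (if P then x else 0)" by simp
lemma mult_delta3: "(if P then x else 0) * (y::real) = (if P then x * y else 0)" by simp
lemma mult_delta4: "(y::real) * (if P then x else 0) = (if P then y * x else 0)" by simp
lemma sum_if_cond: "(\<Sum>b\<in>A. if P then f b else (0::real)) = (if P then (\<Sum>b\<in>A. f b) else 0)" by simp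

lemma yv_line: "yv r (X + s *\<^sub>R axis p 1) $ k = yv r X $ k + s * r0 r $ k $ p"
proof (cases k)
  case None then show ?thesis unfolding yv_def r0_def by simp
next
  case (Some a)
  show ?thesis
  proof (cases p)
    case None then show ?thesis unfolding yv_def r0_def Some line_nth by simp
  next
    case (Some c)
    have "yv r (X + s *\<^sub>R axis p 1) $ k = (\<Sum>b\<in>UNIV. r $ a $ b * X $ Some b + s * (r $ a $ b * (if b = c then 1 else 0)))"
      unfolding yv_def \<open>k = Some a\<close> Some line_nth by (simp add: algebra_simps)
    also have "\<dots> = yv r X $ k + s * r $ a $ c"
      unfolding sum.distrib yv_def \<open>k = Some a\<close> sum_distrib_left[symmetric] by (simp add: mult_delta1)
    finally show ?thesis unfolding r0_def \<open>k = Some a\<close> Some by simp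
  qed
qed

lemma Q2_line:
  assumes sym: "\<And>a b. r $ a $ b = r $ b $ a"
  shows "Q2 r (X + s *\<^sub>R axis p 1) = Q2 r X + 2 * s * yv r X $ p + s^2 * r0 r $ p $ p"
proof (cases p)
  case None
  then show ?thesis unfolding Q2_def yv_def r0_def line_nth by simp
next
  case (Some c)
  have "Q2 r (X + s *\<^sub>R axis p 1) = (\<Sum>a\<in>UNIV. \<Sum>b\<in>UNIV. r $ a $ b * (X $ Some a + s * (if a = c then 1 else 0)) * (X $ Some b + s * (if b = c then 1 else 0)))"
    unfolding Q2_def line_nth Some by simp
  also have "\<dots> = (\<Sum>a\<in>UNIV. \<Sum>b\<in>UNIV. r $ a $ b * X $ Some a * X $ Some b)
     + s * (\<Sum>a\<in>UNIV. \<Sum>b\<in>UNIV. r $ a $ b * (if a = c then 1 else 0) * X $ Some b)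
     + s * (\<Sum>a\<in>UNIV. \<Sum>b\<in>UNIV. r $ a $ b * X $ Some a * (if b = c then 1 else 0))
     + s^2 * (\<Sum>a\<in>UNIV. \<Sum>b\<in>UNIV. r $ a $ b * (if a = c then 1 else 0) * (if b = c then 1 else 0))"
    by (simp add: algebra_simps sum.distrib sum_distrib_left power2_eq_square)
  also have "\<dots> = Q2 r X + s * (\<Sum>b\<in>UNIV. r $ c $ b * X $ Some b) + s * (\<Sum>a\<in>UNIV. r $ c $ a * X $ Some a) + s^2 * r $ c $ c"
  proof -
    have 1: "(\<Sum>a\<in>UNIV. \<Sum>b\<in>UNIV. r $ a $ b * (if a = c then 1 else 0) * X $ Some b) = (\<Sum>b\<in>UNIV. r $ c $ b * X $ Some b)"
      by (simp only: mult_delta1 mult_delta3 sum_if_cond) simp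
    have 2: "(\<Sum>a\<in>UNIV. \<Sum>b\<in>UNIV. r $ a $ b * X $ Some a * (if b = c then 1 else 0)) = (\<Sum>a\<in>UNIV. r $ c $ a * X $ Some a)"
      by (simp only: mult_delta1 sum.delta' simp_thms if_True finite) (simp add: sym)
    have 3: "(\<Sum>a\<in>UNIV. \<Sum>b\<in>UNIV. r $ a $ b * (if a = c then 1 else 0) * (if b = c then 1 else 0)) = r $ c $ c"
      by (simp only: mult_delta1 mult_delta3 sum_if_cond) simp
    show ?thesis unfolding 1 2 3 Q2_def ..
  qed
  finally show ?thesis unfolding Some yv_def r0_def by simp
qed


lemma partial_ev:
  assumes "eventually (\<lambda>s. f (X + s *\<^sub>R axis p 1) = \<phi> s) (nhds 0)"
    and "(\<phi> has_real_derivative D) (at 0)"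
  shows "partial p f X = D"
  unfolding partial_def
  by (rule DERIV_imp_deriv, subst DERIV_cong_ev[OF refl assms(1) refl], rule assms(2))

lemma Q2_pos: "qf r X > 0 \<Longrightarrow> Q2 r X > 0"
  unfolding qf_Q2 by simp

lemma ev_qpos:
  assumes sym: "\<And>a b. r $ a $ b = r $ b $ a" and q: "qf r X > 0"
  shows "eventually (\<lambda>s. qf r (X + s *\<^sub>R axis p 1) > 0) (nhds 0)"
proof -
  let ?f = "\<lambda>s. Q2 r X + 2 * s * yv r X $ p + s^2 * r0 r $ p $ p"
  have "(?f \<longlongrightarrow> ?f 0) (at 0)"
    by (intro tendsto_intros)
  then have "eventually (\<lambda>s. ?f s > 0) (at 0)"
    using Q2_pos[OF q] by (intro order_tendstoD(1)) auto
  then have "eventually (\<lambda>s. ?f s > 0) (nhds 0)"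
    using Q2_pos[OF q] by (simp add: eventually_nhds_conv_at)
  then show ?thesis
    by eventually_elim (simp add: qf_Q2 Q2_line[OF sym])
qed

lemma qf_line_deriv:
  assumes sym: "\<And>a b. r $ a $ b = r $ b $ a" and q: "qf r X > 0"
  shows "((\<lambda>s. qf r (X + s *\<^sub>R axis p 1)) has_real_derivative yv r X $ p / qf r X) (at 0)"
proof -
  have eq: "(\<lambda>s. qf r (X + s *\<^sub>R axis p 1)) = (\<lambda>s. sqrt (Q2 r X + 2 * s * yv r X $ p + s^2 * r0 r $ p $ p))"
    by (simp add: qf_Q2 Q2_line[OF sym])
  have "((\<lambda>s. sqrt (Q2 r X + 2 * s * yv r X $ p + s^2 * r0 r $ p $ p)) has_real_derivative
     inverse (sqrt (Q2 r X + 2 * 0 * yv r X $ p + 0^2 * r0 r $ p $ p)) / 2 * (2 * yv r X $ p + 2 * 0 * r0 r $ p $ p)) (at 0)"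
    using Q2_pos[OF q]
    by (intro DERIV_chain2[OF DERIV_real_sqrt]) (auto intro!: derivative_eq_intros)
  then show ?thesis unfolding eq by (simp add: qf_Q2 field_simps)
qed

lemma Zc_line_deriv: "((\<lambda>s. Zc (X + s *\<^sub>R axis p 1)) has_real_derivative eN p) (at 0)"
  unfolding Zc_line by (auto intro!: derivative_eq_intros)

lemma DsB:
  assumes zf: "(Zs has_real_derivative z') (at s)" and wf: "(Ws has_real_derivative w') (at s)"
  shows "((\<lambda>s. sB g (Zs s) (Ws s)) has_real_derivative (2 * Zs s + g * Ws s) * z' + (g * Zs s + 2 * Ws s) * w') (at s)"
  unfolding sB_def by (auto intro!: derivative_eq_intros zf wf simp: algebra_simps)

lemma DsF:
  assumes zf: "(Zs has_real_derivative z') (at s)" and wf: "(Ws has_real_derivative w') (at s)"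
    and w: "Ws s > 0" and g: "-2 < g" "g < 2"
  shows "((\<lambda>s. sB g (Zs s) (Ws s) * (sJ g (Zs s) (Ws s))^2 / 2) has_real_derivative
     (sJ g (Zs s) (Ws s))^2 * ((Zs s + g * Ws s) * z' + Ws s * w')) (at s)"
proof -
  have B: "sB g (Zs s) (Ws s) > 0" using sB_pos g w by auto
  show ?thesis
    apply (rule DERIV_cong[OF DERIV_cdivide[OF DERIV_mult[OF DsB[OF zf wf] DERIV_power[OF DsJ[OF zf wf w g]]]]])
    using B by (simp add: field_simps power2_eq_square)
qed


lemma Jf_eq: "qf r Y > 0 \<Longrightarrow> Jf g r Y = sJ g (Zc Y) (qf r Y)"
  unfolding Jf_def sJ_def Phif_def Af_def sA_def by simp

lemma Kf_sq: "qf r Y > 0 \<Longrightarrow> -2 < g \<Longrightarrow> g < 2 \<Longrightarrow>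
   (Kf g r Y)^2 / 2 = sB g (Zc Y) (qf r Y) * (sJ g (Zc Y) (qf r Y))^2 / 2"
  unfolding Kf_def Jf_eq
  using sB_nonneg[of g "Zc Y" "qf r Y"]
  by (simp add: power_mult_distrib Bf_def sB_def algebra_simps)

definition gradF :: "real \<Rightarrow> real^'m^'m \<Rightarrow> real^('m::finite option) \<Rightarrow> 'm option \<Rightarrow> real" where
  "gradF g r X p = (sJ g (Zc X) (qf r X))^2 * ((Zc X + g * qf r X) * eN p + yv r X $ p)"

lemma line0: "X + 0 *\<^sub>R axis p 1 = X" by simp

lemma grad:
  assumes sym: "\<And>a b. r $ a $ b = r $ b $ a" and g: "-2 < g" "g < 2" and q: "qf r X > 0"
  shows "partial p (\<lambda>Y. (Kf g r Y)^2 / 2) X = gradF g r X p"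
proof (rule partial_ev)
  show "eventually (\<lambda>s. (Kf g r (X + s *\<^sub>R axis p 1))^2 / 2 =
      sB g (Zc (X + s *\<^sub>R axis p 1)) (qf r (X + s *\<^sub>R axis p 1)) * (sJ g (Zc (X + s *\<^sub>R axis p 1)) (qf r (X + s *\<^sub>R axis p 1)))^2 / 2) (nhds 0)"
    using ev_qpos[OF sym q, of p] by eventually_elim (rule Kf_sq[OF _ g])
  have d: "((\<lambda>s. sB g (Zc (X + s *\<^sub>R axis p 1)) (qf r (X + s *\<^sub>R axis p 1)) * (sJ g (Zc (X + s *\<^sub>R axis p 1)) (qf r (X + s *\<^sub>R axis p 1)))^2 / 2)
     has_real_derivative (sJ g (Zc (X + 0 *\<^sub>R axis p 1)) (qf r (X + 0 *\<^sub>R axis p 1)))^2 * ((Zc (X + 0 *\<^sub>R axis p 1) + g * qf r (X + 0 *\<^sub>R axis p 1)) * eN p + qf r (X + 0 *\<^sub>R axis p 1) * (yv r X $ p / qf r X))) (at 0)"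
    by (rule DsF[OF Zc_line_deriv qf_line_deriv[OF sym q] _ g]) (simp add: q)
  show "((\<lambda>s. sB g (Zc (X + s *\<^sub>R axis p 1)) (qf r (X + s *\<^sub>R axis p 1)) * (sJ g (Zc (X + s *\<^sub>R axis p 1)) (qf r (X + s *\<^sub>R axis p 1)))^2 / 2)
     has_real_derivative gradF g r X p) (at 0)"
    by (rule DERIV_cong[OF d]) (use q in \<open>simp add: gradF_def\<close>)
qed

definition hessF :: "real \<Rightarrow> real^'m^'m \<Rightarrow> real^('m::finite option) \<Rightarrow> 'm option \<Rightarrow> 'm option \<Rightarrow> real" where
  "hessF g r X k p = (sJ g (Zc X) (qf r X))^2 *
     (g / sB g (Zc X) (qf r X) * (qf r X * eN p - Zc X * (yv r X $ p / qf r X)) * ((Zc X + g * qf r X) * eN k + yv r X $ k)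
      + (eN p + g * (yv r X $ p / qf r X)) * eN k + r0 r $ k $ p)"

lemma hess:
  assumes sym: "\<And>a b. r $ a $ b = r $ b $ a" and g: "-2 < g" "g < 2" and q: "qf r X > 0"
  shows "partial p (\<lambda>Y. partial k (\<lambda>Y. (Kf g r Y)^2 / 2) Y) X = hessF g r X k p"
proof (rule partial_ev)
  let ?l = "\<lambda>s. X + s *\<^sub>R axis p 1"
  show "eventually (\<lambda>s. partial k (\<lambda>Y. (Kf g r Y)^2 / 2) (?l s) = gradF g r (?l s) k) (nhds 0)"
    using ev_qpos[OF sym q, of p] by eventually_elim (rule grad[OF sym g])
  have dy: "((\<lambda>s. yv r (?l s) $ k) has_real_derivative r0 r $ k $ p) (at 0)"
    unfolding yv_line by (auto intro!: derivative_eq_intros)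
  have dJ: "((\<lambda>s. sJ g (Zc (?l s)) (qf r (?l s))) has_real_derivative
      sJ g (Zc (?l 0)) (qf r (?l 0)) * g / (2 * sB g (Zc (?l 0)) (qf r (?l 0))) * (qf r (?l 0) * eN p - Zc (?l 0) * (yv r X $ p / qf r X))) (at 0)"
    by (rule DsJ[OF Zc_line_deriv qf_line_deriv[OF sym q] _ g]) (simp add: q)
  have dZ: "((\<lambda>s. Zc (?l s)) has_real_derivative eN p) (at 0)" by (rule Zc_line_deriv)
  have dq: "((\<lambda>s. qf r (?l s)) has_real_derivative yv r X $ p / qf r X) (at 0)" by (rule qf_line_deriv[OF sym q])
  show "((\<lambda>s. gradF g r (?l s) k) has_real_derivative hessF g r X k p) (at 0)"
    unfolding gradF_def
    apply (rule DERIV_cong)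
     apply (rule dJ dy dZ dq DERIV_cmult DERIV_cmult_right DERIV_power DERIV_add DERIV_mult DERIV_const)+
    using q sB_pos[OF g q, of "Zc X"] by (simp add: hessF_def field_simps power2_eq_square)
qed


lemma sigma_eq: "qf r X > 0 \<Longrightarrow> sigma g r X $ k =
   hh g * xt X $ k * sJ g (Zc X) (qf r X) + eN k * sA g (Zc X) (qf r X) * sJ g (Zc X) (qf r X)"
  unfolding sigma_def Jf_eq xt_def eN_def Af_def sA_def by (cases k) auto

definition sjac :: "real \<Rightarrow> real^'m^'m \<Rightarrow> real^('m::finite option) \<Rightarrow> 'm option \<Rightarrow> 'm option \<Rightarrow> real" where
  "sjac g r X k p = (let J = sJ g (Zc X) (qf r X);
      Jd = J * g / (2 * sB g (Zc X) (qf r X)) * (qf r X * eN p - Zc X * (yv r X $ p / qf r X)) in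
     hh g * Ip $ k $ p * J + hh g * xt X $ k * Jd + eN k * ((eN p + g * (yv r X $ p / qf r X) / 2) * J + sA g (Zc X) (qf r X) * Jd))"

lemma sigjac_eq:
  assumes sym: "\<And>a b. r $ a $ b = r $ b $ a" and g: "-2 < g" "g < 2" and q: "qf r X > 0"
  shows "sigjac g r X k p = sjac g r X k p"
  unfolding sigjac_def
proof (rule partial_ev)
  let ?l = "\<lambda>s. X + s *\<^sub>R axis p 1"
  show "eventually (\<lambda>s. sigma g r (?l s) $ k = hh g * xt (?l s) $ k * sJ g (Zc (?l s)) (qf r (?l s)) + eN k * sA g (Zc (?l s)) (qf r (?l s)) * sJ g (Zc (?l s)) (qf r (?l s))) (nhds 0)"
    using ev_qpos[OF sym q, of p] by eventually_elim (rule sigma_eq)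
  have dx: "((\<lambda>s. xt (?l s) $ k) has_real_derivative Ip $ k $ p) (at 0)"
    unfolding xt_line by (auto intro!: derivative_eq_intros)
  have dJ: "((\<lambda>s. sJ g (Zc (?l s)) (qf r (?l s))) has_real_derivative
      sJ g (Zc (?l 0)) (qf r (?l 0)) * g / (2 * sB g (Zc (?l 0)) (qf r (?l 0))) * (qf r (?l 0) * eN p - Zc (?l 0) * (yv r X $ p / qf r X))) (at 0)"
    by (rule DsJ[OF Zc_line_deriv qf_line_deriv[OF sym q] _ g]) (simp add: q)
  have dZ: "((\<lambda>s. Zc (?l s)) has_real_derivative eN p) (at 0)" by (rule Zc_line_deriv)
  have dq: "((\<lambda>s. qf r (?l s)) has_real_derivative yv r X $ p / qf r X) (at 0)" by (rule qf_line_deriv[OF sym q])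
  show "((\<lambda>s. hh g * xt (?l s) $ k * sJ g (Zc (?l s)) (qf r (?l s)) + eN k * sA g (Zc (?l s)) (qf r (?l s)) * sJ g (Zc (?l s)) (qf r (?l s))) has_real_derivative sjac g r X k p) (at 0)"
    unfolding sA_def
    apply (rule DERIV_cong)
     apply (rule dJ dx dZ dq DERIV_cmult DERIV_cmult_right DERIV_cdivide DERIV_add DERIV_mult DERIV_const)+
    using q sB_pos[OF g q, of "Zc X"] by (simp add: sjac_def sA_def Let_def field_simps power2_eq_square)
qed


lemma sum_option: "(\<Sum>p\<in>(UNIV::'m::finite option set). f p) = f None + (\<Sum>a\<in>UNIV. f (Some a))"
proof -
  have "(UNIV::'m option set) = insert None (Some ` UNIV)" by (rule UNIV_option_conv)
  then have "(\<Sum>p\<in>(UNIV::'m option set). f p) = (\<Sum>p\<in>insert None (Some ` UNIV). f p)" by simp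
  also have "\<dots> = f None + (\<Sum>p\<in>Some ` UNIV. f p)" by (subst sum.insert) auto
  also have "(\<Sum>p\<in>Some ` UNIV. f p) = (\<Sum>a\<in>UNIV. f (Some a))" by (subst sum.reindex) (auto simp: inj_on_def)
  finally show ?thesis .
qed

definition evec :: "real^('m::finite option)" where "evec = axis None 1"
definition col :: "real^'n^'n \<Rightarrow> 'n \<Rightarrow> real^'n" where "col M i = (\<chi> k. M $ k $ i)"
definition outer :: "real^'n \<Rightarrow> real^'n \<Rightarrow> real^'n^'n" where "outer u v = (\<chi> i j. u $ i * v $ j)"

lemma evec_nth: "evec $ k = eN k" unfolding evec_def eN_def axis_def by auto

lemma inner_option: "(u::real^('m::finite option)) \<bullet> v = u $ None * v $ None + (\<Sum>a\<in>UNIV. u $ Some a * v $ Some a)"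
  unfolding inner_vec_def by (simp add: sum_option)

lemma r0_xt: 
  assumes sym: "\<And>a b. r $ a $ b = r $ b $ a"
  shows "r0 r *v xt X = yv r X"
  unfolding matrix_vector_mult_def
  by (auto simp: vec_eq_iff sum_option r0_def xt_def yv_def split: option.splits)

lemma r0_evec: "r0 r *v evec = 0"
  unfolding matrix_vector_mult_def
  by (auto simp: vec_eq_iff sum_option r0_def evec_nth eN_def split: option.splits)

lemma rfull_r0: "rfull r *v w = r0 r *v w + (w $ None) *\<^sub>R evec"
  unfolding matrix_vector_mult_def
  by (auto simp: vec_eq_iff sum_option r0_def rfull_def evec_nth eN_def split: option.splits)

lemma xt_yv: "xt X \<bullet> yv r X = Q2 r X"
  unfolding inner_option xt_def yv_def Q2_def
  by (simp add: sum_distrib_left algebra_simps)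

lemma xt_evec[simp]: "xt X \<bullet> evec = 0" unfolding inner_option xt_def evec_nth eN_def by simp
lemma yv_evec[simp]: "yv r X \<bullet> evec = 0" unfolding inner_option yv_def evec_nth eN_def by simp
lemma evec_evec[simp]: "evec \<bullet> (evec::real^('m::finite option)) = 1" unfolding inner_option evec_nth eN_def by simp
lemma evec_r0[simp]: "evec \<bullet> (r0 r *v w) = 0"
  unfolding inner_option evec_nth eN_def matrix_vector_mult_def r0_def by simp
lemma r0_evec'[simp]: "(r0 r *v w) \<bullet> evec = 0"
  by (metis evec_r0 inner_commute)

lemma ip_inner: "col Ip i \<bullet> w = (if i = None then 0 else w $ i)"
  by (cases i) (auto simp: inner_option col_def Ip_def mult_delta2)

lemma ip_r0: "col Ip i \<bullet> (r0 r *v col Ip j) = r0 r $ i $ j"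
  unfolding ip_inner
  by (cases i; cases j) (auto simp: matrix_vector_mult_def col_def Ip_def r0_def sum_option mult_delta1)

lemma r0_ip: "r0 r *v col Ip j = col (r0 r) j"
  by (cases j) (auto simp: vec_eq_iff matrix_vector_mult_def col_def Ip_def r0_def sum_option mult_delta1 split: option.splits)

lemma xt_r0_ip:
  assumes sym: "\<And>a b. r $ a $ b = r $ b $ a"
  shows "xt X \<bullet> (r0 r *v col Ip j) = yv r X $ j"
  unfolding r0_ip
  by (cases j) (auto simp: inner_option col_def r0_def xt_def yv_def sym algebra_simps)

lemma tPMP: "(transpose P ** M ** P) $ i $ j = col P i \<bullet> (M *v col P j)"
proof -
  have "(transpose P ** M ** P) $ i $ j = (\<Sum>l\<in>UNIV. \<Sum>k\<in>UNIV. P $ k $ i * M $ k $ l * P $ l $ j)"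
    unfolding matrix_matrix_mult_def transpose_def by (simp add: sum_distrib_right)
  also have "\<dots> = (\<Sum>k\<in>UNIV. \<Sum>l\<in>UNIV. P $ k $ i * M $ k $ l * P $ l $ j)"
    by (rule sum.swap)
  also have "\<dots> = col P i \<bullet> (M *v col P j)"
    unfolding inner_vec_def matrix_vector_mult_def col_def by (simp add: sum_distrib_left mult.assoc)
  finally show ?thesis .
qed


lemma entry_id:
  fixes g Z q J H r yi yj ei ej B A :: real
  assumes H: "H = 1 - g^2/4" "H > 0" and q: "q > 0" and B: "B = Z^2 + g*q*Z + q^2" "B > 0"
    and A: "A = Z + g*q/2"
  shows "J^2 * r + J * ((J*g/(2*B)*(q*ej - Z*(yj/q))) * yi + (J*g/(2*B)*(q*ei - Z*(yi/q))) * yj)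
     + q^2 * (J*g/(2*B)*(q*ei - Z*(yi/q))) * (J*g/(2*B)*(q*ej - Z*(yj/q)))
     + ((ei + g*(yi/q)/2)*J + A*(J*g/(2*B)*(q*ei - Z*(yi/q)))) * ((ej + g*(yj/q)/2)*J + A*(J*g/(2*B)*(q*ej - Z*(yj/q)))) / H
     - g^2/(4*H*B) * (H*J*yi + H*q^2*(J*g/(2*B)*(q*ei - Z*(yi/q))) + A*((ei + g*(yi/q)/2)*J + A*(J*g/(2*B)*(q*ei - Z*(yi/q)))))
                   * (H*J*yj + H*q^2*(J*g/(2*B)*(q*ej - Z*(yj/q))) + A*((ej + g*(yj/q)/2)*J + A*(J*g/(2*B)*(q*ej - Z*(yj/q)))))
   = J^2 * (g / B * (q * ei - Z * (yi / q)) * ((Z + g*q) * ej + yj) + (ei + g * (yi / q)) * ej + r)"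
proof -
  have nB: "B \<noteq> 0" using B by simp
  have nH: "H \<noteq> 0" using H by simp
  have H4: "4 * H = 4 - g^2" using H by simp
  have A2: "2 * A = 2 * Z + g * q" using A by simp
  show ?thesis
    using nB nH q
    apply (simp add: field_simps)
    using H4 A2 B(1)
    apply algebra
    done
qed

lemma entry_id2:
  fixes g Z q J h r yi yj ei ej B A Jdi Jdj bti btj GGg :: real
  assumes h: "h > 0" "h^2 = 1 - g^2/4" and q: "q > 0" and B: "B = Z^2 + g*q*Z + q^2" "B > 0"
    and A: "A = Z + g*q/2" and GG: "GGg = g / h"
    and Jdi: "Jdi = J*g/(2*B)*(q*ei - Z*(yi/q))" and Jdj: "Jdj = J*g/(2*B)*(q*ej - Z*(yj/q))"
    and bti: "bti = (ei + g*(yi/q)/2)*J + A*Jdi" and btj: "btj = (ej + g*(yj/q)/2)*J + A*Jdj"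
  shows "(1/h^2) * (h^2*J^2*r + h*J*(h*Jdj)*yi + h*Jdi*(h*J)*yj + h^2*Jdi*Jdj*q^2 + bti*btj)
     - GGg^2/4 * ((1/sqrt B)*(h^2*J*yj + h^2*q^2*Jdj + A*btj)) * ((1/sqrt B)*(h^2*J*yi + h^2*q^2*Jdi + A*bti))
   = J^2 * (g / B * (q * ei - Z * (yi / q)) * ((Z + g*q) * ej + yj) + (ei + g * (yi / q)) * ej + r)"
proof -
  have hp: "h^2 > 0" using h(1) by simp
  have s: "(1/sqrt B) * (1/sqrt B) = 1 / B" using B by (simp add: real_sqrt_mult[symmetric])
  have "(1/h^2) * (h^2*J^2*r + h*J*(h*Jdj)*yi + h*Jdi*(h*J)*yj + h^2*Jdi*Jdj*q^2 + bti*btj)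
     - GGg^2/4 * ((1/sqrt B)*(h^2*J*yj + h^2*q^2*Jdj + A*btj)) * ((1/sqrt B)*(h^2*J*yi + h^2*q^2*Jdi + A*bti))
     = J^2 * r + J * (Jdj * yi + Jdi * yj) + q^2 * Jdi * Jdj + bti * btj / h^2
     - g^2/(4*h^2*B) * (h^2*J*yi + h^2*q^2*Jdi + A*bti) * (h^2*J*yj + h^2*q^2*Jdj + A*btj)"
  proof -
    have "GGg^2/4 * ((1/sqrt B)*(h^2*J*yj + h^2*q^2*Jdj + A*btj)) * ((1/sqrt B)*(h^2*J*yi + h^2*q^2*Jdi + A*bti))
       = GGg^2/4 * ((1/sqrt B) * (1/sqrt B)) * (h^2*J*yj + h^2*q^2*Jdj + A*btj) * (h^2*J*yi + h^2*q^2*Jdi + A*bti)"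
      by (simp only: mult_ac)
    also have "\<dots> = g^2/(4*h^2*B) * (h^2*J*yi + h^2*q^2*Jdi + A*bti) * (h^2*J*yj + h^2*q^2*Jdj + A*btj)"
      unfolding s GG using h B by (simp add: field_simps power2_eq_square)
    finally show ?thesis using h by (simp add: field_simps power2_eq_square)
  qed
  also have "\<dots> = J^2 * (g / B * (q * ei - Z * (yi / q)) * ((Z + g*q) * ej + yj) + (ei + g * (yi / q)) * ej + r)"
    unfolding bti btj Jdi Jdj
    by (rule entry_id[of "h^2", OF h(2) hp q B A])
  finally show ?thesis .
qed


lemma evec_xt[simp]: "evec \<bullet> xt X = 0" by (metis xt_evec inner_commute)
lemma evec_yv[simp]: "evec \<bullet> yv r X = 0" by (metis yv_evec inner_commute)
lemma ip_None[simp]: "col Ip i $ None = 0" unfolding col_def Ip_def by simp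
lemma xt_None[simp]: "xt X $ None = 0" unfolding xt_def by simp
lemma evec_None[simp]: "evec $ None = 1" unfolding evec_nth eN_def by simp
lemma ip_evec[simp]: "col Ip i \<bullet> evec = 0" unfolding ip_inner evec_nth eN_def by simp
lemma ip_yv[simp]: "col Ip i \<bullet> yv r X = yv r X $ i" unfolding ip_inner by (auto simp: yv_def)

lemma yv_ip[simp]: "yv r X \<bullet> col Ip i = yv r X $ i" by (metis ip_yv inner_commute)
lemma evec_ip[simp]: "evec \<bullet> col Ip i = 0" by (metis ip_evec inner_commute)

lemma quad_inner: "(\<Sum>p\<in>UNIV. \<Sum>q\<in>UNIV. M $ p $ q * t $ p * t $ q) = t \<bullet> (M *v t)"
  unfolding inner_vec_def matrix_vector_mult_def by (simp add: sum_distrib_left algebra_simps)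

locale pt =
  fixes r :: "real^'m::finite^'m" and g :: real and R :: "real^('m option)"
  assumes sym: "\<And>a b. r $ a $ b = r $ b $ a" and g_lo: "-2 < g" and g_hi: "g < 2"
    and q_pos: "qf r R > 0"
begin

abbreviation "Z \<equiv> Zc R"
abbreviation "q \<equiv> qf r R"
abbreviation "J \<equiv> sJ g Z q"
abbreviation "B \<equiv> sB g Z q"
abbreviation "A \<equiv> sA g Z q"
abbreviation "h \<equiv> hh g"
abbreviation "y \<equiv> yv r R"
abbreviation "x \<equiv> xt R"

definition "Jd i = J * g / (2 * B) * (q * eN i - Z * (y $ i / q))"
definition "bt i = (eN i + g * (y $ i / q) / 2) * J + A * Jd i"
definition "Pm = (\<chi> k p. sigjac g r R k p)"
definition "t = sigma g r R"
definition "Lu = (\<chi> p. t $ p / Sf r t)"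
definition "Ll = rfull r *v Lu"
definition "Nd = (\<chi> rr s. 1 / h^2 * rfull r $ rr $ s - (GG g)^2 / 4 * Ll $ rr * Ll $ s)"

lemma h_pos: "h > 0" using hh_pos g_lo g_hi by auto
lemma B_pos: "B > 0" using sB_pos g_lo g_hi q_pos by auto
lemma J_pos: "J > 0" unfolding sJ_def by simp
lemma q2: "Q2 r R = q^2" using q_pos by (simp add: qf_Q2)

lemma col_Pm: "col Pm i = (h * J) *\<^sub>R col Ip i + (h * Jd i) *\<^sub>R x + bt i *\<^sub>R evec"
  unfolding col_def Pm_def
  using q_pos B_pos
  by (auto simp: vec_eq_iff sigjac_eq[OF sym g_lo g_hi q_pos] sjac_def Let_def Jd_def bt_def evec_nth col_def field_simps)

lemma t_eq: "t = (h * J) *\<^sub>R x + (A * J) *\<^sub>R evec"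
  unfolding t_def
  by (auto simp: vec_eq_iff sigma_eq[OF q_pos] evec_nth algebra_simps)

lemma rt: "rfull r *v t = (h * J) *\<^sub>R y + (A * J) *\<^sub>R evec"
  unfolding rfull_r0 t_eq
  by (simp add: matrix_vector_right_distrib matrix_vector_mult_scaleR r0_xt[OF sym] r0_evec)

lemma trt: "t \<bullet> (rfull r *v t) = J^2 * B"
  unfolding rt apply (subst (1) t_eq)
  by (simp add: inner_add_left inner_add_right xt_yv q2 sB_eq[OF g_lo g_hi] power2_eq_square algebra_simps)

lemma S_eq: "Sf r t = J * sqrt B"
  unfolding Sf_def quad_inner trt using J_pos B_pos by (simp add: real_sqrt_mult)

lemma Ll_eq: "Ll = (1 / (J * sqrt B)) *\<^sub>R ((h * J) *\<^sub>R y + (A * J) *\<^sub>R evec)"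
proof -
  have "Lu = (1 / Sf r t) *\<^sub>R t" unfolding Lu_def by (simp add: vec_eq_iff)
  then show ?thesis unfolding Ll_def by (simp add: matrix_vector_mult_scaleR rt S_eq)
qed

lemma col_rfull_col: "col Pm i \<bullet> (rfull r *v col Pm j) =
   h^2 * J^2 * r0 r $ i $ j + h * J * (h * Jd j) * y $ i + h * Jd i * (h * J) * y $ j + h^2 * Jd i * Jd j * q^2 + bt i * bt j"
  unfolding rfull_r0 col_Pm
  by (simp add: inner_add_left inner_add_right matrix_vector_right_distrib matrix_vector_mult_scaleR
     r0_xt[OF sym] r0_evec ip_r0 xt_r0_ip[OF sym] xt_yv q2 power2_eq_square algebra_simps)

lemma Ll_col: "Ll \<bullet> col Pm i = (1 / sqrt B) * (h^2 * J * y $ i + h^2 * q^2 * Jd i + A * bt i)"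
  unfolding Ll_eq col_Pm using J_pos B_pos
  by (simp add: inner_add_left inner_add_right xt_yv q2 inner_commute[of "yv r R" "xt R"] power2_eq_square field_simps)


lemma r0_sym: "r0 r $ i $ j = r0 r $ j $ i"
  unfolding r0_def by (cases i; cases j) (auto simp: sym)

lemma Nd_mult: "Nd *v w = (1 / h^2) *\<^sub>R (rfull r *v w) - ((GG g)^2 / 4 * (Ll \<bullet> w)) *\<^sub>R Ll"
  unfolding Nd_def
  by (simp add: vec_eq_iff matrix_vector_mult_def inner_vec_def sum_subtractf sum_distrib_left algebra_simps)

lemma gmet_entry: "gmet g r R $ i $ j = hessF g r R j i"
  unfolding gmet_def using hess[OF sym g_lo g_hi q_pos] by simp

lemma G_eq: "transpose Pm ** Nd ** Pm = gmet g r R"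
proof -
  have "(transpose Pm ** Nd ** Pm) $ i $ j = gmet g r R $ i $ j" for i j
  proof -
    have "(transpose Pm ** Nd ** Pm) $ i $ j =
      (1/h^2) * (col Pm i \<bullet> (rfull r *v col Pm j)) - (GG g)^2/4 * (Ll \<bullet> col Pm j) * (Ll \<bullet> col Pm i)"
      unfolding tPMP Nd_mult by (simp add: inner_diff_right inner_commute[of "col Pm i" Ll])
    also have "\<dots> = hessF g r R j i"
      unfolding col_rfull_col Ll_col hessF_def r0_sym[of i j]
      apply (rule entry_id2[OF h_pos hh_sq[OF g_lo g_hi] q_pos _ B_pos])
      by (simp_all add: sB_def sA_def GG_def Jd_def bt_def evec_nth)
    finally show ?thesis unfolding gmet_entry .
  qed
  then show ?thesis by (simp add: vec_eq_iff)
qed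

end


lemma prod_option: "(\<Prod>p\<in>(UNIV::'m::finite option set). f p) = f None * (\<Prod>a\<in>UNIV. f (Some a))"
proof -
  have "(UNIV::'m option set) = insert None (Some ` UNIV)" by (rule UNIV_option_conv)
  then have "(\<Prod>p\<in>(UNIV::'m option set). f p) = (\<Prod>p\<in>insert None (Some ` UNIV). f p)" by simp
  also have "\<dots> = f None * (\<Prod>p\<in>Some ` UNIV. f p)" by (subst prod.insert) auto
  also have "(\<Prod>p\<in>Some ` UNIV. f p) = (\<Prod>a\<in>UNIV. f (Some a))" by (subst prod.reindex) (auto simp: inj_on_def)
  finally show ?thesis .
qed

lemma det_rfull: "det (rfull r) = det (r :: real^'m::finite^'m)"
proof -
  let ?f = "\<lambda>p. of_int (sign p) * (\<Prod>i\<in>UNIV. rfull r $ i $ p i)"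
  let ?T = "{p. p permutes (UNIV :: 'm option set) \<and> p None = None}"
  let ?j = "\<lambda>p. map_permutation (UNIV :: 'm set) Some p"
  let ?i = "\<lambda>P. map_permutation (range Some) the P"
  have "det (rfull r) = sum ?f {p. p permutes (UNIV :: 'm option set)}" unfolding det_def ..
  also have "\<dots> = sum ?f ?T"
  proof (rule sum.mono_neutral_right)
    show "finite {p. p permutes (UNIV :: 'm option set)}" by (simp add: finite_permutations)
    show "?T \<subseteq> {p. p permutes (UNIV :: 'm option set)}" by auto
    show "\<forall>p\<in>{p. p permutes (UNIV :: 'm option set)} - ?T. ?f p = 0"
    proof
      fix p assume "p \<in> {p. p permutes (UNIV :: 'm option set)} - ?T"
      then have "p None \<noteq> None" by auto
      then have "rfull r $ None $ p None = 0" unfolding rfull_def by (cases "p None") auto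
      then have "(\<Prod>i\<in>UNIV. rfull r $ i $ p i) = 0" by (intro prod_zero) auto
      then show "?f p = 0" by simp
    qed
  qed
  also have "\<dots> = sum (\<lambda>p. of_int (sign p) * (\<Prod>i\<in>UNIV. r $ i $ p i)) {p. p permutes (UNIV :: 'm set)}"
  proof (rule sym, rule sum.reindex_bij_witness[where i = ?i and j = ?j])
    have bS: "bij_betw Some (UNIV :: 'm set) (range Some)" by (simp add: bij_betw_def)
    have bT: "bij_betw the (range Some) (UNIV :: 'm set)"
      by (auto simp: bij_betw_def inj_on_def image_iff)
    have pr: "P permutes range Some" if "P \<in> ?T" for P :: "'m option \<Rightarrow> 'm option"
    proof -
      from that have P: "P permutes UNIV" "P None = None" by auto
      show ?thesis unfolding permutes_def
      proof (intro conjI allI impI)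
        fix z :: "'m option" assume "z \<notin> range Some"
        then have "z = None" by (cases z) auto
        then show "P z = z" using P by simp
      next
        fix z show "\<exists>!x. P x = z" using P(1) unfolding permutes_def by blast
      qed
    qed
    show "?i (?j p) = p" if "p \<in> {p. p permutes (UNIV :: 'm set)}" for p
      using that by (intro map_permutation_compose_inv[OF bS]) auto
    show "?j p \<in> ?T" if "p \<in> {p. p permutes (UNIV :: 'm set)}" for p
    proof -
      have "?j p permutes range Some" using that map_permutation_permutes[OF bS] by auto
      then have "?j p permutes UNIV" by (rule permutes_subset) auto
      moreover have "?j p None = None" unfolding map_permutation_def restrict_id_def by auto
      ultimately show ?thesis by auto
    qed
    show "?j (?i P) = P" if "P \<in> ?T" for P
      using pr[OF that] by (intro map_permutation_compose_inv[OF bT]) auto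
    show "?i P \<in> {p. p permutes (UNIV :: 'm set)}" if "P \<in> ?T" for P
      using map_permutation_permutes[OF bT pr[OF that]] by auto
    show "?f (?j p) = of_int (sign p) * (\<Prod>i\<in>UNIV. r $ i $ p i)" if "p \<in> {p. p permutes (UNIV :: 'm set)}" for p
    proof -
      have sg: "sign (?j p) = sign p" using that by (intro sign_map_permutation) auto
      have ap: "?j p (Some a) = Some (p a)" for a by (rule map_permutation_apply) auto
      have aN: "?j p None = None" unfolding map_permutation_def restrict_id_def by auto
      show ?thesis unfolding sg prod_option ap aN by (simp add: rfull_def)
    qed
  qed
  also have "\<dots> = det r" unfolding det_def ..
  finally show ?thesis .
qed


lemma det_col_replace_id: fixes k :: "'n::finite" shows "det (\<chi> i j. if j = k then (z::real^'n) $ i else mat 1 $ i $ j) = z $ k"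
proof -
  have "(mat 1 :: real^'n^'n) *v z = z" by (rule matrix_vector_mul_lid)
  then show ?thesis using cramer_lemma[of k "mat 1 :: real^'n^'n" z] by (simp only: matrix_vector_mul_lid det_I mult_1_right)
qed

lemma outer_mult: "outer u w *v v = (w \<bullet> v) *\<^sub>R (u::real^'n)"
  by (simp add: vec_eq_iff matrix_vector_mult_def outer_def inner_vec_def sum_distrib_left algebra_simps)

lemma det_rank1:
  fixes u w :: "real^'n"
  assumes nz: "1 + w \<bullet> u \<noteq> 0"
  shows "det (mat 1 + outer u w) = 1 + w \<bullet> u"
proof (cases "u = 0")
  case True
  have "outer u w = 0" unfolding True outer_def by (simp add: vec_eq_iff)
  then show ?thesis unfolding True by simp
next
  case False
  then obtain k where uk: "u $ k \<noteq> 0" by (metis vec_eq_iff zero_index)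
  let ?M = "mat 1 + outer u w"
  let ?x = "(1 / (1 + w \<bullet> u)) *\<^sub>R u"
  have Mx: "?M *v ?x = u"
  proof -
    have "?M *v u = (1 + w \<bullet> u) *\<^sub>R u"
      by (simp add: matrix_vector_mult_add_rdistrib outer_mult matrix_vector_mul_lid algebra_simps)
    then show ?thesis using nz by (simp add: matrix_vector_mult_scaleR)
  qed
  let ?E = "(\<chi> i j. if j = k then u $ i else mat 1 $ i $ j) :: real^'n^'n"
  let ?D = "(\<chi> i j. if i = k then (if j = k then 1 else w $ j) else mat 1 $ i $ j) :: real^'n^'n"
  have C: "(\<chi> i j. if j = k then (?M *v ?x) $ i else ?M $ i $ j) = ?E ** ?D"
  proof -
    have "(?E ** ?D) $ i $ j = (if j = k then u $ i else ?M $ i $ j)" for i j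
    proof -
      have "(?E ** ?D) $ i $ j = (\<Sum>l\<in>UNIV. ?E $ i $ l * ?D $ l $ j)"
        unfolding matrix_matrix_mult_def by simp
      also have "\<dots> = (\<Sum>l\<in>UNIV. (if l = k then u $ i * (if j = k then 1 else w $ j) else 0)
          + (if l = k then 0 else (if i = l then 1 else 0) * (if l = j then 1 else 0)))"
        by (rule sum.cong) (auto simp: mat_def)
      also have "\<dots> = u $ i * (if j = k then 1 else w $ j) + (if i = j \<and> i \<noteq> k then 1 else 0)"
      proof -
        have s1: "(\<Sum>l\<in>UNIV. (if l = k then u $ i * (if j = k then 1 else w $ j) else 0)) = u $ i * (if j = k then 1 else w $ j)"
          by simp
        have "(\<Sum>l\<in>UNIV. (if l = k then 0 else (if i = l then 1 else 0) * (if l = j then 1 else 0)))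
            = (\<Sum>l\<in>UNIV. if l = i then (if l = k then 0 else (if l = j then 1 else 0)) else (0::real))"
          by (rule sum.cong) auto
        also have "\<dots> = (if i = j \<and> i \<noteq> k then 1 else 0)"
          by auto
        finally show ?thesis unfolding sum.distrib s1 by simp
      qed
      also have "\<dots> = (if j = k then u $ i else ?M $ i $ j)"
        by (auto simp: outer_def mat_def)
      finally show ?thesis .
    qed
    then show ?thesis unfolding Mx by (simp add: vec_eq_iff)
  qed
  have dE: "det ?E = u $ k" by (rule det_col_replace_id)
  have "det ?D = det (transpose ?D)" by simp
  also have "transpose ?D = (\<chi> i j. if j = k then (\<chi> i. if i = k then 1 else w $ i) $ i else mat 1 $ i $ j)"
    by (auto simp: transpose_def vec_eq_iff mat_def)
  also have "det \<dots> = 1" by (subst det_col_replace_id) simp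
  finally have dD: "det ?D = 1" .
  have "?x $ k * det ?M = u $ k"
    using cramer_lemma[of k ?M ?x] unfolding C det_mul dE dD by simp
  then have "u $ k * det ?M = u $ k * (1 + w \<bullet> u)" using nz by (simp add: field_simps)
  then show ?thesis using uk by simp
qed


lemma lin_solve:
  fixes a b h J q B A Z g :: real
  assumes pos: "h > 0" "J > 0" "q > 0" "B > 0" and B: "B = Z^2 + g*q*Z + q^2" and A: "A = Z + g*q/2"
    and e2: "h * J * a + h * (J*g/(2*B)*(q*b - Z*(a/q))) * q^2 = 0"
    and e1: "J * b + g*J/(2*q) * a + A * (J*g/(2*B)*(q*b - Z*(a/q))) = 0"
  shows "a = 0 \<and> b = 0"
proof -
  have e2': "a * (2*B - g*q*Z) + g * q^3 * b = 0"
  proof -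
    have "h*J*(2*B*q) * (a * (2*B - g*q*Z) + g*q^3*b) = (2*B*q)*(2*B) * (h * J * a + h * (J*g/(2*B)*(q*b - Z*(a/q))) * q^2)"
      using pos by (simp add: field_simps power2_eq_square power3_eq_cube)
    then show ?thesis using pos e2 by simp
  qed
  have e1': "b * q * (2*B + A*g*q) + a * g * (B - A*Z) = 0"
  proof -
    have "J * (b * q * (2*B + A*g*q) + a * g * (B - A*Z)) = (2*B*q) * (J * b + g*J/(2*q) * a + A * (J*g/(2*B)*(q*b - Z*(a/q))))"
      using pos by (simp add: field_simps power2_eq_square power3_eq_cube)
    then show ?thesis using pos e1 by simp
  qed
  have "a * (4*q*B^2) = 0" using e1' e2' B A by algebra
  moreover have "b * (4*q*B^2) = 0" using e1' e2' B A by algebra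
  ultimately show ?thesis using pos by simp
qed

lemma inv_eq:
  fixes A B :: "real^'n^'n"
  assumes "A ** B = mat 1"
  shows "matrix_inv A = B"
proof -
  have BA: "B ** A = mat 1" using assms matrix_left_right_inverse by blast
  have "\<exists>A'. A ** A' = mat 1 \<and> A' ** A = mat 1" using assms BA by blast
  then have "A ** matrix_inv A = mat 1 \<and> matrix_inv A ** A = mat 1"
    unfolding matrix_inv_def by (rule someI_ex)
  then have "matrix_inv A = matrix_inv A ** (A ** B)" using assms by simp
  also have "\<dots> = B" using \<open>A ** matrix_inv A = mat 1 \<and> matrix_inv A ** A = mat 1\<close>
    by (simp add: matrix_mul_assoc)
  finally show ?thesis .
qed

lemma inner_transpose: "(M *v u) \<bullet> (v::real^'n) = u \<bullet> (transpose M *v v)"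
  by (metis dot_lmul_matrix inner_commute transpose_matrix_vector)

lemma evec_inner: "evec \<bullet> w = w $ None"
  unfolding inner_option evec_nth eN_def by simp

lemma Ip_mult: "Ip *v w = w - (w $ None) *\<^sub>R evec"
  unfolding matrix_vector_mult_def Ip_def
  by (auto simp: vec_eq_iff evec_nth eN_def mult_delta2 cong: if_cong)

lemma rfull_quad: "w \<bullet> (rfull r *v w) = (w $ None)^2 + (\<chi> a. w $ Some a) \<bullet> (r *v (\<chi> a. w $ Some a))"
  unfolding inner_option
  by (simp add: matrix_vector_mult_def rfull_def sum_option inner_vec_def power2_eq_square)

lemma rfull_inj:
  assumes r_pos: "\<And>x. x \<noteq> 0 \<Longrightarrow> x \<bullet> (r *v x) > 0" and w: "rfull r *v w = 0"
  shows "w = 0"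
proof -
  let ?m = "(\<chi> a. w $ Some a)"
  have 0: "(w $ None)^2 + ?m \<bullet> (r *v ?m) = 0" using w rfull_quad[of w r] by simp
  have nn: "?m \<bullet> (r *v ?m) \<ge> 0" using r_pos[of ?m] by (cases "?m = 0") auto
  have "(w $ None)^2 = 0" using 0 nn zero_le_power2[of "w $ None"] by linarith
  then have "w $ None = 0" by simp
  then have "?m \<bullet> (r *v ?m) = 0" using 0 by simp
  then have "?m = 0" using r_pos[of ?m] by (cases "?m = 0") auto
  then have "w $ Some a = 0" for a by (metis vec_lambda_beta zero_index)
  then show ?thesis using \<open>w $ None = 0\<close> by (metis (full_types) not_None_eq vec_eq_iff zero_index)
qed

lemma rfull_sym: assumes sym: "\<And>a b. r $ a $ b = r $ b $ a" shows "transpose (rfull r) = rfull r"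
  unfolding transpose_def rfull_def by (auto simp: vec_eq_iff sym split: option.splits)

context pt begin

lemma Pm_entry: "Pm $ k $ i = (h*J) * Ip $ k $ i + h * Jd i * x $ k + bt i * eN k"
  using col_Pm[of i] unfolding col_def by (simp add: vec_eq_iff evec_nth)


definition "Jdv = (\<chi> i. Jd i)"
definition "btv = (\<chi> i. bt i)"

lemma Pm_mult: "Pm *v w = (h*J) *\<^sub>R (Ip *v w) + (h * (Jdv \<bullet> w)) *\<^sub>R x + (btv \<bullet> w) *\<^sub>R evec"
  by (simp add: vec_eq_iff matrix_vector_mult_def Pm_entry inner_vec_def sum.distrib sum_distrib_left
      sum_distrib_right algebra_simps evec_nth Jdv_def btv_def)

lemma Jdv_eq: "Jdv = (J*g/(2*B)) *\<^sub>R (q *\<^sub>R evec - (Z/q) *\<^sub>R y)"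
  unfolding Jdv_def Jd_def using q_pos B_pos by (simp add: vec_eq_iff evec_nth field_simps)

lemma btv_eq: "btv = J *\<^sub>R evec + (g*J/(2*q)) *\<^sub>R y + A *\<^sub>R Jdv"
  unfolding btv_def bt_def Jdv_def by (simp add: vec_eq_iff evec_nth algebra_simps)

lemma Pm_inj: assumes w: "Pm *v w = 0" shows "w = 0"
proof -
  let ?a = "y \<bullet> w" and ?b = "w $ None"
  have c: "Jdv \<bullet> w = J*g/(2*B) * (q * ?b - Z * (?a / q))"
    unfolding Jdv_eq using q_pos B_pos by (simp add: inner_diff_left evec_inner field_simps)
  have d: "btv \<bullet> w = J * ?b + g*J/(2*q) * ?a + A * (J*g/(2*B) * (q * ?b - Z * (?a / q)))"
    unfolding btv_eq by (simp add: inner_add_left evec_inner c)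
  have "evec \<bullet> (Pm *v w) = btv \<bullet> w"
    unfolding Pm_mult Ip_mult by (simp add: inner_add_right inner_diff_right evec_inner)
  then have e1: "J * ?b + g*J/(2*q) * ?a + A * (J*g/(2*B) * (q * ?b - Z * (?a / q))) = 0"
    using w d by simp
  have "y \<bullet> (Pm *v w) = h * J * ?a + h * (J*g/(2*B) * (q * ?b - Z * (?a / q))) * q^2"
    unfolding Pm_mult Ip_mult c
    by (simp add: inner_add_right inner_diff_right inner_commute[of "yv r R" "xt R"] xt_yv q2 algebra_simps)
  then have e2: "h * J * ?a + h * (J*g/(2*B) * (q * ?b - Z * (?a / q))) * q^2 = 0"
    using w by simp
  have ab: "?a = 0 \<and> ?b = 0"
    by (rule lin_solve[OF h_pos J_pos q_pos B_pos _ _ e2 e1]) (simp_all add: sB_def sA_def)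
  then have "Jdv \<bullet> w = 0" "btv \<bullet> w = 0" using c d by simp_all
  then have "(h*J) *\<^sub>R (Ip *v w) = 0" using w unfolding Pm_mult by simp
  then have "Ip *v w = 0" using h_pos J_pos by simp
  then show ?thesis using ab unfolding Ip_mult by simp
qed

lemma Pm_inv: "Pm ** matrix_inv Pm = mat 1" "matrix_inv Pm ** Pm = mat 1"
proof -
  have "\<exists>B. B ** Pm = mat 1" using Pm_inj matrix_left_invertible_ker by blast
  then have "invertible Pm" using invertible_left_inverse by blast
  then have "\<exists>A'. Pm ** A' = mat 1 \<and> A' ** Pm = mat 1" unfolding invertible_def .
  then have "Pm ** matrix_inv Pm = mat 1 \<and> matrix_inv Pm ** Pm = mat 1"
    unfolding matrix_inv_def by (rule someI_ex)
  then show "Pm ** matrix_inv Pm = mat 1" "matrix_inv Pm ** Pm = mat 1" by auto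
qed

end


lemma det_scaleR: "det (c *\<^sub>R (M::real^'n^'n)) = c ^ CARD('n) * det M"
proof -
  have 1: "det (\<chi> i. c *s M $ i) = prod (\<lambda>i. c) (UNIV::'n set) * det (\<chi> i. M $ i)" using det_rows_mul[of "\<lambda>i. c" "\<lambda>i. M $ i"] by simp
  have 2: "(\<chi> i. c *s M $ i) = c *\<^sub>R M" by (simp add: vec_eq_iff)
  have 3: "(\<chi> i. M $ i) = M" by simp
  show ?thesis using 1 unfolding 2 3 by simp
qed

lemma mult_outer: "M ** outer u v = outer (M *v u) (v::real^'n)"
  by (simp add: vec_eq_iff matrix_matrix_mult_def outer_def matrix_vector_mult_def sum_distrib_left mult_ac)

lemma rc: "(a::real) * b * c = a * c * b" by simp

lemma PMPt: "((P::real^'n^'n) ** M ** transpose P) $ i $ j = (\<Sum>p\<in>UNIV. \<Sum>q\<in>UNIV. P $ i $ p * P $ j $ q * M $ p $ q)"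
proof -
  have "(P ** M ** transpose P) $ i $ j = (\<Sum>q\<in>UNIV. (\<Sum>p\<in>UNIV. P $ i $ p * M $ p $ q) * P $ j $ q)"
    unfolding matrix_matrix_mult_def transpose_def by simp
  also have "\<dots> = (\<Sum>q\<in>UNIV. \<Sum>p\<in>UNIV. P $ i $ p * M $ p $ q * P $ j $ q)"
    by (simp add: sum_distrib_right)
  also have "\<dots> = (\<Sum>p\<in>UNIV. \<Sum>q\<in>UNIV. P $ i $ p * M $ p $ q * P $ j $ q)" by (rule sum.swap)
  also have "\<dots> = (\<Sum>p\<in>UNIV. \<Sum>q\<in>UNIV. P $ i $ p * P $ j $ q * M $ p $ q)"
    by (intro sum.cong refl) (rule rc)
  finally show ?thesis .
qed

context pt begin

definition "Nup = (\<chi> rr s. h^2 * matrix_inv (rfull r) $ rr $ s + g^2 / 4 * Lu $ rr * Lu $ s)"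

lemma rinv:
  assumes r_pos: "\<And>x. x \<noteq> 0 \<Longrightarrow> x \<bullet> (r *v x) > 0"
  shows "rfull r ** matrix_inv (rfull r) = mat 1" "matrix_inv (rfull r) ** rfull r = mat 1"
proof -
  have "\<exists>B. B ** rfull r = mat 1" using rfull_inj[OF r_pos] matrix_left_invertible_ker by blast
  then have "invertible (rfull r)" using invertible_left_inverse by blast
  then have "\<exists>A'. rfull r ** A' = mat 1 \<and> A' ** rfull r = mat 1" unfolding invertible_def .
  then have "rfull r ** matrix_inv (rfull r) = mat 1 \<and> matrix_inv (rfull r) ** rfull r = mat 1"
    unfolding matrix_inv_def by (rule someI_ex)
  then show "rfull r ** matrix_inv (rfull r) = mat 1" "matrix_inv (rfull r) ** rfull r = mat 1" by auto
qed

lemma Nup_mult: "Nup *v w = h^2 *\<^sub>R (matrix_inv (rfull r) *v w) + (g^2/4 * (Lu \<bullet> w)) *\<^sub>R Lu"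
proof -
  have "Nup = h^2 *\<^sub>R matrix_inv (rfull r) + outer ((g^2/4) *\<^sub>R Lu) Lu"
    unfolding Nup_def outer_def by (simp add: vec_eq_iff)
  then show ?thesis
    by (simp add: matrix_vector_mult_add_rdistrib scaleR_matrix_vector_assoc[symmetric] outer_mult)
qed

lemma Lu_eq: "Lu = (1 / Sf r t) *\<^sub>R t" unfolding Lu_def by (simp add: vec_eq_iff)

lemma Ll_Lu: "Ll \<bullet> Lu = 1"
proof -
  have "Ll \<bullet> Lu = (rfull r *v Lu) \<bullet> Lu" unfolding Ll_def ..
  also have "\<dots> = Lu \<bullet> (rfull r *v Lu)" by (rule inner_commute)
  also have "\<dots> = (1 / Sf r t) * ((1 / Sf r t) * (t \<bullet> (rfull r *v t)))"
    unfolding Lu_eq by (simp only: matrix_vector_mult_scaleR inner_scaleR_left inner_scaleR_right)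
  also have "\<dots> = 1"
  proof -
    have sB: "sqrt B * sqrt B = B" using B_pos by simp
    have "sqrt B > 0" using B_pos by simp
    then show ?thesis unfolding trt S_eq using J_pos sB by (simp add: field_simps power2_eq_square)
  qed
  finally show ?thesis .
qed

lemma Nd_Nup:
  assumes r_pos: "\<And>x. x \<noteq> 0 \<Longrightarrow> x \<bullet> (r *v x) > 0"
  shows "Nd ** Nup = mat 1"
proof -
  note ri = rinv[OF r_pos]
  have rr: "rfull r *v (matrix_inv (rfull r) *v w) = w" for w
    by (simp add: matrix_vector_mul_assoc ri matrix_vector_mul_lid)
  have Llr: "Ll \<bullet> (matrix_inv (rfull r) *v w) = Lu \<bullet> w" for w
    unfolding Ll_def inner_transpose rfull_sym[OF sym] rr ..
  have coef: "1 / h^2 * (g^2/4) - (GG g)^2 / 4 * (h^2 + g^2/4) = 0"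
    using h_pos hh_sq[OF g_lo g_hi] unfolding GG_def by (simp add: field_simps power2_eq_square)
  have "Nd *v (Nup *v w) = w" for w
  proof -
    let ?c = "g^2/4 * (Lu \<bullet> w)"
    have r1: "rfull r *v (Nup *v w) = h^2 *\<^sub>R w + ?c *\<^sub>R Ll"
      unfolding Nup_mult by (simp only: matrix_vector_right_distrib matrix_vector_mult_scaleR rr Ll_def)
    have r2: "Ll \<bullet> (Nup *v w) = h^2 * (Lu \<bullet> w) + ?c"
      unfolding Nup_mult by (simp only: inner_add_right inner_scaleR_right Llr Ll_Lu mult_1_right)
    have "Nd *v (Nup *v w) = (1 / h^2) *\<^sub>R (h^2 *\<^sub>R w + ?c *\<^sub>R Ll) - ((GG g)^2 / 4 * (h^2 * (Lu \<bullet> w) + ?c)) *\<^sub>R Ll"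
      unfolding Nd_mult r1 r2 ..
    also have "\<dots> = w + ((1 / h^2 * (g^2/4) - (GG g)^2 / 4 * (h^2 + g^2/4)) * (Lu \<bullet> w)) *\<^sub>R Ll"
      using h_pos by (simp add: scaleR_add_right scaleR_diff_left algebra_simps)
    finally show ?thesis unfolding coef by simp
  qed
  then show ?thesis by (simp add: matrix_eq matrix_vector_mul_assoc[symmetric] matrix_vector_mul_lid)
qed


lemma gmet_inv:
  assumes r_pos: "\<And>x. x \<noteq> 0 \<Longrightarrow> x \<bullet> (r *v x) > 0"
  shows "matrix_inv (gmet g r R) = matrix_inv Pm ** Nup ** transpose (matrix_inv Pm)"
proof (rule inv_eq)
  let ?Pi = "matrix_inv Pm"
  have "gmet g r R ** (?Pi ** Nup ** transpose ?Pi) = (transpose Pm ** Nd ** Pm) ** (?Pi ** Nup ** transpose ?Pi)"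
    unfolding G_eq ..
  also have "\<dots> = transpose Pm ** (Nd ** ((Pm ** ?Pi) ** Nup)) ** transpose ?Pi"
    by (simp only: matrix_mul_assoc)
  also have "\<dots> = transpose Pm ** transpose ?Pi"
    by (simp add: Pm_inv Nd_Nup[OF r_pos] matrix_mul_lid matrix_mul_rid)
  also have "\<dots> = transpose (?Pi ** Pm)" by (simp add: matrix_transpose_mul)
  also have "\<dots> = mat 1" by (simp add: Pm_inv)
  finally show "gmet g r R ** (?Pi ** Nup ** transpose ?Pi) = mat 1" .
qed

lemma nup_eq:
  assumes r_pos: "\<And>x. x \<noteq> 0 \<Longrightarrow> x \<bullet> (r *v x) > 0"
  shows "(\<chi> rr s. \<Sum>p\<in>UNIV. \<Sum>q\<in>UNIV.
                  sigjac g r R rr p * sigjac g r R s q * matrix_inv (gmet g r R) $ p $ q) = Nup"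
proof -
  let ?Pi = "matrix_inv Pm"
  have "(\<chi> rr s. \<Sum>p\<in>UNIV. \<Sum>q\<in>UNIV.
                  sigjac g r R rr p * sigjac g r R s q * matrix_inv (gmet g r R) $ p $ q)
      = Pm ** matrix_inv (gmet g r R) ** transpose Pm"
    by (simp add: vec_eq_iff PMPt Pm_def)
  also have "\<dots> = (Pm ** ?Pi) ** Nup ** transpose (Pm ** ?Pi)"
  proof -
    have X: "matrix_inv (gmet g r R) = matrix_inv Pm ** Nup ** transpose (matrix_inv Pm)" by (rule gmet_inv[OF r_pos])
    show ?thesis unfolding X by (simp only: matrix_mul_assoc matrix_transpose_mul)
  qed
  also have "\<dots> = Nup" by (simp add: Pm_inv matrix_mul_lid matrix_mul_rid)
  finally show ?thesis .
qed

lemma det_Nd: "det Nd = h powr (2 * (1 - real CARD('m option))) * det r"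
proof -
  let ?u = "(-(g^2/4)) *\<^sub>R Lu"
  have hs: "h^2 = 1 - g^2/4" by (rule hh_sq[OF g_lo g_hi])
  have Nd_fact: "Nd = (1/h^2) *\<^sub>R (rfull r ** (mat 1 + outer ?u Ll))"
  proof -
    have ru: "rfull r *v ?u = (-(g^2/4)) *\<^sub>R Ll" by (simp only: matrix_vector_mult_scaleR Ll_def)
    have "rfull r ** (mat 1 + outer ?u Ll) = rfull r + outer ((-(g^2/4)) *\<^sub>R Ll) Ll"
      by (simp only: matrix_add_ldistrib matrix_mul_rid mult_outer ru)
    moreover have "Nd = (1/h^2) *\<^sub>R (rfull r + outer ((-(g^2/4)) *\<^sub>R Ll) Ll)"
      unfolding Nd_def outer_def using h_pos by (simp add: vec_eq_iff GG_def field_simps power2_eq_square)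
    ultimately show ?thesis by simp
  qed
  have "Ll \<bullet> ?u = - (g^2/4)" using Ll_Lu by simp
  then have d1: "det (mat 1 + outer ?u Ll) = h^2"
    using det_rank1[of Ll ?u] hs h_pos Ll_Lu g4[OF g_lo g_hi] by simp
  have "det Nd = (1/h^2) ^ CARD('m option) * (det r * h^2)"
    unfolding Nd_fact det_scaleR det_mul d1 det_rfull ..
  also have "\<dots> = h powr (2 * (1 - real CARD('m option))) * det r"
  proof -
    let ?N = "CARD('m option)"
    have a: "h powr (2 * (1 - real ?N)) = h powr 2 / h powr (real (2 * ?N))"
      by (simp add: powr_diff[symmetric] algebra_simps)
    have b: "h powr 2 = h^2" using h_pos by (simp add: powr_numeral)
    have c: "h powr (real (2 * ?N)) = (h^2)^?N" using powr_realpow[OF h_pos, of "2 * ?N"] by (simp only: power_mult)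
    have d: "(1/h^2)^?N = 1 / (h^2)^?N" by (rule power_one_over)
    show ?thesis unfolding a b c d by simp
  qed
  finally show ?thesis .
qed

end

theorem theorem2p15:
  fixes r :: "real^'m::finite^'m" and g :: real and R :: "real^('m option)"
  assumes r_sym: "\<And>a b. r $ a $ b = r $ b $ a"
    and r_pos: "\<And>x. x \<noteq> 0 \<Longrightarrow> x \<bullet> (r *v x) > 0"
    and g_range: "-2 < g" "g < 2"
    and q_pos: "qf r R > 0"
  shows
    "let t = sigma g r R;
         Lu = (\<chi> p. t $ p / Sf r t);
         Ll = rfull r *v Lu;
         nup = (\<chi> rr s. \<Sum>p\<in>UNIV. \<Sum>q\<in>UNIV.
                  sigjac g r R rr p * sigjac g r R s q * matrix_inv (gmet g r R) $ p $ q)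
     in nup = (\<chi> rr s. (hh g)^2 * matrix_inv (rfull r) $ rr $ s + g^2 / 4 * Lu $ rr * Lu $ s)
      \<and> matrix_inv nup = (\<chi> rr s. 1 / (hh g)^2 * rfull r $ rr $ s - (GG g)^2 / 4 * Ll $ rr * Ll $ s)
      \<and> det (matrix_inv nup) = hh g powr (2 * (1 - real CARD('m option))) * det r"
proof -
  interpret P: pt r g R by unfold_locales (use r_sym g_range q_pos in auto)
  have tt: "sigma g r R = P.t" by (simp add: P.t_def)
  have LL: "(\<chi> p. P.t $ p / Sf r P.t) = P.Lu" by (simp add: P.Lu_def)
  have NupNd: "P.Nup ** P.Nd = mat 1" using P.Nd_Nup[OF r_pos] matrix_left_right_inverse by blast
  have inv: "matrix_inv P.Nup = P.Nd" by (rule inv_eq[OF NupNd])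
  have N: "(\<chi> rr s. \<Sum>p\<in>UNIV. \<Sum>q\<in>UNIV.
                  sigjac g r R rr p * sigjac g r R s q * matrix_inv (gmet g r R) $ p $ q) = P.Nup"
    by (rule P.nup_eq[OF r_pos])
  have D: "det P.Nd = hh g powr (2 * (1 - real CARD('m option))) * det r" by (rule P.det_Nd)
  show ?thesis
    unfolding Let_def tt LL P.Ll_def[symmetric] N P.Nup_def[symmetric] P.Nd_def[symmetric]
      inv D by simp
qed


end
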